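(* Let $G=(V,E)$ be a finite simple graph with vertex set $V=\{v_1,\dots,v_n\}$, let $O$ be an orientation of $G$ and let $D:E\to\mathbb{N}$ assign a positive integer strength to every edge, so that $(G,D,O)$ is an augmented orientation. Let $k$ be the maximum augmented in-degree of a vertex in $(G,D,O)$. If the number of even Eulerian structures in $(G,D,O)$ is different from the number of odd Eulerian structures in $(G,D,O)$, then \[ AT(G)-1=\alpha(f_G)\le \alpha(W_{G,D})\le k . \]
   Context: For a nonzero polynomial $Q$, $\alpha(Q)$ denotes the minimum $k$ such that some monomial $m$ occurring in $Q$ with nonzero coefficient satisfies $\deg(m)=\deg(Q)$ and every variable has degree at most $k$ in $m$. The graph polynomial of $G$ is $f_G(x_1,\dots,x_n)=\prod_{i<j,\ \{v_i,v_j\}\in E}(x_i-x_j)$, and the Alon–Tarsi number is $AT(G)=\alpha(f_G)+1$. An augmented orientation $(G,D,O)$ consists of a graph $G$, an orientation $O$ of $G$, and $D:E\to\mathbb{N}$ assigning positive strengths to edges; the augmented in-degree (resp. out-degree) of a vertex is the sum of the strengths of its incoming (resp. outgoing) edges. The augmented graph polynomial is $W_{G,D}(x_1,\dots,x_n)=\prod_{i<j,\ e=\{v_i,v_j\}\in E}(x_i^{D(e)}-x_j^{D(e)})$. An Eulerian structure in $(G,D,O)$ is a subgraph $F$ of $G$ without isolated vertices (the empty graph is allowed) such that every vertex of $F$ has augmented in-degree equal to its augmented out-degree in $F$, with the orientation and strengths restricted from $O$ and $D$. An Eulerian structure is even (odd) if its number of edges is even (odd). *)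

theory Defs
  imports "HOL-Library.Poly_Mapping"
begin

text \<open>Multivariate integer polynomials in variables x_0, x_1, ...:
  a monomial is a finitely supported exponent vector (nat =>0 nat),
  a polynomial is a finitely supported map from monomials to coefficients.\<close>

type_synonym mpoly = "(nat \<Rightarrow>\<^sub>0 nat) \<Rightarrow>\<^sub>0 int"

definition Var :: "nat \<Rightarrow> mpoly" where
  "Var i = Poly_Mapping.single (Poly_Mapping.single i 1) 1"

definition mon_deg :: "(nat \<Rightarrow>\<^sub>0 nat) \<Rightarrow> nat" where
  "mon_deg m = (\<Sum>i\<in>Poly_Mapping.keys m. Poly_Mapping.lookup m i)"

definition total_deg :: "mpoly \<Rightarrow> nat" where
  "total_deg Q = Max (mon_deg ` Poly_Mapping.keys Q)"

text \<open>alpha(Q): least k such that some monomial of Q of top degree has all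
  variable degrees at most k (meaningful for Q \<noteq> 0).\<close>
definition alpha :: "mpoly \<Rightarrow> nat" where
  "alpha Q = (LEAST k. \<exists>m\<in>Poly_Mapping.keys Q. mon_deg m = total_deg Q \<and> (\<forall>i. Poly_Mapping.lookup m i \<le> k))"

text \<open>Simple graphs on vertex set {0..<n} (vertex v_(i+1) is i), edges are 2-element sets.\<close>
definition simple_graph :: "nat \<Rightarrow> nat set set \<Rightarrow> bool" where
  "simple_graph n E \<longleftrightarrow> (\<forall>e\<in>E. \<exists>i j. e = {i, j} \<and> i \<noteq> j \<and> i < n \<and> j < n)"

definition graph_poly :: "nat set set \<Rightarrow> mpoly" where
  "graph_poly E = (\<Prod>e\<in>E. Var (Min e) - Var (Max e))"

definition AT :: "nat set set \<Rightarrow> nat" where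
  "AT E = alpha (graph_poly E) + 1"

definition aug_graph_poly :: "nat set set \<Rightarrow> (nat set \<Rightarrow> nat) \<Rightarrow> mpoly" where
  "aug_graph_poly E D = (\<Prod>e\<in>E. Var (Min e) ^ D e - Var (Max e) ^ D e)"

text \<open>An orientation Ori of E: a set of arcs (u,v) (meaning u \<rightarrow> v) such that every
  edge gets exactly one direction and every arc comes from an edge.\<close>
definition orientation :: "nat set set \<Rightarrow> (nat \<times> nat) set \<Rightarrow> bool" where
  "orientation E Ori \<longleftrightarrow> (\<forall>(u,v)\<in>Ori. {u,v} \<in> E) \<and>
     (\<forall>e\<in>E. \<exists>!a. a \<in> Ori \<and> e = {fst a, snd a})"

definition aug_orientation :: "nat \<Rightarrow> nat set set \<Rightarrow> (nat set \<Rightarrow> nat) \<Rightarrow> (nat \<times> nat) set \<Rightarrow> bool" where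
  "aug_orientation n E D Ori \<longleftrightarrow> simple_graph n E \<and> orientation E Ori \<and> (\<forall>e\<in>E. D e > 0)"

definition aug_indeg :: "nat set set \<Rightarrow> (nat set \<Rightarrow> nat) \<Rightarrow> (nat \<times> nat) set \<Rightarrow> nat \<Rightarrow> nat" where
  "aug_indeg F D Ori v = (\<Sum>a\<in>{a\<in>Ori. {fst a, snd a} \<in> F \<and> snd a = v}. D {fst a, snd a})"

definition aug_outdeg :: "nat set set \<Rightarrow> (nat set \<Rightarrow> nat) \<Rightarrow> (nat \<times> nat) set \<Rightarrow> nat \<Rightarrow> nat" where
  "aug_outdeg F D Ori v = (\<Sum>a\<in>{a\<in>Ori. {fst a, snd a} \<in> F \<and> fst a = v}. D {fst a, snd a})"

text \<open>Eulerian structure: a subgraph without isolated vertices, i.e. determined by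
  its edge set F \<subseteq> E (its vertices are the endpoints of F), such that every vertex
  of F has equal augmented in- and out-degree in F. Vertices not in F have both
  degrees 0, so the condition may be stated for all vertices.\<close>
definition eulerian_structure :: "nat \<Rightarrow> nat set set \<Rightarrow> (nat set \<Rightarrow> nat) \<Rightarrow> (nat \<times> nat) set \<Rightarrow> nat set set \<Rightarrow> bool" where
  "eulerian_structure n E D Ori F \<longleftrightarrow> F \<subseteq> E \<and>
     (\<forall>v\<in>\<Union>F. aug_indeg F D Ori v = aug_outdeg F D Ori v)"

definition num_even_ES :: "nat \<Rightarrow> nat set set \<Rightarrow> (nat set \<Rightarrow> nat) \<Rightarrow> (nat \<times> nat) set \<Rightarrow> nat" where
  "num_even_ES n E D Ori = card {F. eulerian_structure n E D Ori F \<and> even (card F)}"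

definition num_odd_ES :: "nat \<Rightarrow> nat set set \<Rightarrow> (nat set \<Rightarrow> nat) \<Rightarrow> (nat \<times> nat) set \<Rightarrow> nat" where
  "num_odd_ES n E D Ori = card {F. eulerian_structure n E D Ori F \<and> odd (card F)}"

end

theory Submission
  imports Defs
begin


lemma var_pow: "Var v ^ d = Poly_Mapping.single (Poly_Mapping.single v d) 1"
proof (induction d)
  case 0 then show ?case by simp
next
  case (Suc d)
  have "Var v ^ Suc d = Poly_Mapping.single (Poly_Mapping.single v 1) 1 * Poly_Mapping.single (Poly_Mapping.single v d) 1"
    by (subst power_Suc, subst Suc, simp only: Var_def)
  also have "\<dots> = Poly_Mapping.single (Poly_Mapping.single v (1 + d)) 1"
    by (simp only: mult_single single_add mult_1)
  finally show ?case by simp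
qed

lemma prod_single:
  assumes "finite A"
  shows "(\<Prod>a\<in>A. Poly_Mapping.single (f a) (g a) :: 'k::comm_monoid_add \<Rightarrow>\<^sub>0 'r::comm_semiring_1)
     = Poly_Mapping.single (\<Sum>a\<in>A. f a) (\<Prod>a\<in>A. g a)"
  using assms by (induction A rule: finite_induct) (simp_all add: mult_single)

lemma mon_deg_superset:
  assumes "finite S" "Poly_Mapping.keys m \<subseteq> S"
  shows "mon_deg m = (\<Sum>i\<in>S. Poly_Mapping.lookup m i)"
  unfolding mon_deg_def
  by (rule sum.mono_neutral_left) (use assms in \<open>auto simp: in_keys_iff\<close>)

lemma mon_deg_add: "mon_deg (a + b) = mon_deg a + mon_deg b"
proof -
  let ?S = "Poly_Mapping.keys a \<union> Poly_Mapping.keys b"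
  have "mon_deg (a + b) = (\<Sum>i\<in>?S. Poly_Mapping.lookup (a + b) i)"
    by (rule mon_deg_superset) (auto simp: keys_add)
  also have "\<dots> = (\<Sum>i\<in>?S. Poly_Mapping.lookup a i) + (\<Sum>i\<in>?S. Poly_Mapping.lookup b i)"
    by (simp add: lookup_add sum.distrib)
  also have "\<dots> = mon_deg a + mon_deg b"
    by (simp add: mon_deg_superset[symmetric])
  finally show ?thesis .
qed

lemma mon_deg_zero: "mon_deg 0 = 0" by (simp add: mon_deg_def)

lemma mon_deg_single: "mon_deg (Poly_Mapping.single i d) = d"
  by (subst mon_deg_superset[of "{i}"]) auto

lemma mon_deg_sum: "mon_deg (\<Sum>a\<in>A. f a) = (\<Sum>a\<in>A. mon_deg (f a))"
  by (induction A rule: infinite_finite_induct) (simp_all add: mon_deg_zero mon_deg_add)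

lemma lookup_sum_single:
  assumes "finite B" shows "Poly_Mapping.lookup (\<Sum>a\<in>B. Poly_Mapping.single (f a) (g a :: nat)) v = (\<Sum>a\<in>{a\<in>B. f a = v}. g a)"
  using assms by (simp add: lookup_sum lookup_single when_def sum.inter_filter)

lemma prod_pm1:
  assumes "\<And>a. a \<in> A \<Longrightarrow> s a = (1::'r::comm_ring_1) \<or> s a = -1"
  shows "(\<Prod>a\<in>A. s a) = 1 \<or> (\<Prod>a\<in>A. s a) = -1"
  using assms
proof (induction A rule: infinite_finite_induct)
  case (insert x F)
  then have "s x = 1 \<or> s x = -1" "prod s F = 1 \<or> prod s F = -1" by auto
  then show ?case using insert(1,2) by auto
qed auto



locale oriset =
  fixes n :: nat and E :: "nat set set" and Ori :: "(nat \<times> nat) set"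
  assumes sg: "simple_graph n E" and ori: "orientation E Ori"
begin

definition ed :: "nat \<times> nat \<Rightarrow> nat set" where "ed a = {fst a, snd a}"

lemma arc_in: "a \<in> Ori \<Longrightarrow> ed a \<in> E"
  using ori unfolding orientation_def ed_def by auto

lemma arc_props: assumes "a \<in> Ori" shows "fst a \<noteq> snd a" "fst a < n" "snd a < n"
proof -
  from sg arc_in[OF assms] obtain i j where "ed a = {i, j}" "i \<noteq> j" "i < n" "j < n"
    unfolding simple_graph_def by blast
  then have h: "{fst a, snd a} = {i, j}" "i \<noteq> j" "i < n" "j < n" unfolding ed_def by auto
  then have "fst a \<in> {i, j}" "snd a \<in> {i, j}" by blast+
  then show "fst a < n" "snd a < n" using h by auto
  show "fst a \<noteq> snd a"
  proof
    assume "fst a = snd a"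
    then have "{i, j} = {fst a}" using h(1) by simp
    then show False using h(2) by blast
  qed
qed

lemma inj_ed: "inj_on ed Ori"
proof
  fix a b assume ab: "a \<in> Ori" "b \<in> Ori" "ed a = ed b"
  then have "ed a \<in> E" by (simp add: arc_in)
  moreover have "\<forall>e\<in>E. \<exists>!c. c \<in> Ori \<and> e = {fst c, snd c}" using ori unfolding orientation_def by (rule conjunct2)
  ultimately have u: "\<exists>!c. c \<in> Ori \<and> ed a = {fst c, snd c}" by (rule bspec[rotated])
  have "a \<in> Ori \<and> ed a = {fst a, snd a}" "b \<in> Ori \<and> ed a = {fst b, snd b}"
    using ab unfolding ed_def by auto
  with u show "a = b" by (metis ex1E)
qed

lemma img_ed: "ed ` Ori = E"
proof
  show "ed ` Ori \<subseteq> E" using arc_in by auto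
  show "E \<subseteq> ed ` Ori"
  proof
    fix e assume "e \<in> E"
    moreover have "\<forall>e\<in>E. \<exists>!c. c \<in> Ori \<and> e = {fst c, snd c}" using ori unfolding orientation_def by (rule conjunct2)
    ultimately have "\<exists>!c. c \<in> Ori \<and> e = {fst c, snd c}" by (rule bspec[rotated])
    then obtain c where "c \<in> Ori" "e = {fst c, snd c}" by (metis ex1_implies_ex)
    then show "e \<in> ed ` Ori" by (intro image_eqI[of _ _ c]) (simp_all add: ed_def)
  qed
qed

lemma fin_Ori: "finite Ori"
proof -
  have "Ori \<subseteq> {..<n} \<times> {..<n}" using arc_props by (auto simp: mem_Times_iff)
  then show ?thesis by (rule finite_subset) auto
qed

lemma fin_E: "finite E" using img_ed fin_Ori by auto

definition P :: "(nat set \<Rightarrow> nat) \<Rightarrow> mpoly" where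
  "P D = (\<Prod>a\<in>Ori. Var (snd a) ^ D (ed a) - Var (fst a) ^ D (ed a))"

lemma W_eq: "\<exists>c. (c = 1 \<or> c = -1) \<and> aug_graph_poly E D = c * P D"
proof -
  define s :: "nat \<times> nat \<Rightarrow> mpoly" where "s a = (if snd a < fst a then 1 else -1)" for a
  have "aug_graph_poly E D = (\<Prod>a\<in>Ori. Var (Min (ed a)) ^ D (ed a) - Var (Max (ed a)) ^ D (ed a))"
    unfolding aug_graph_poly_def img_ed[symmetric] by (rule prod.reindex[OF inj_ed, unfolded comp_def])
  also have "\<dots> = (\<Prod>a\<in>Ori. s a * (Var (snd a) ^ D (ed a) - Var (fst a) ^ D (ed a)))"
  proof (rule prod.cong[OF refl])
    fix a assume "a \<in> Ori"
    then have "fst a \<noteq> snd a" by (rule arc_props)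
    then show "Var (Min (ed a)) ^ D (ed a) - Var (Max (ed a)) ^ D (ed a) = s a * (Var (snd a) ^ D (ed a) - Var (fst a) ^ D (ed a))"
      unfolding s_def ed_def by (cases "snd a < fst a") auto
  qed
  also have "\<dots> = (\<Prod>a\<in>Ori. s a) * P D" unfolding P_def by (rule prod.distrib)
  finally have eq: "aug_graph_poly E D = (\<Prod>a\<in>Ori. s a) * P D" .
  have "(\<Prod>a\<in>Ori. s a) = 1 \<or> (\<Prod>a\<in>Ori. s a) = -1"
    by (rule prod_pm1) (simp add: s_def)
  with eq show ?thesis by blast
qed

definition mB :: "(nat set \<Rightarrow> nat) \<Rightarrow> (nat \<times> nat) set \<Rightarrow> (nat \<Rightarrow>\<^sub>0 nat)" where
  "mB D B = (\<Sum>a\<in>B. Poly_Mapping.single (fst a) (D (ed a))) + (\<Sum>a\<in>Ori - B. Poly_Mapping.single (snd a) (D (ed a)))"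

lemma P_expand: "P D = (\<Sum>B\<in>Pow Ori. Poly_Mapping.single (mB D B) ((-1) ^ card B))"
proof -
  have "P D = (\<Prod>a\<in>Ori. Poly_Mapping.single (Poly_Mapping.single (fst a) (D (ed a))) (-1)
          + Poly_Mapping.single (Poly_Mapping.single (snd a) (D (ed a))) 1)"
    unfolding P_def var_pow by (intro prod.cong refl) (simp add: single_uminus)
  also have "\<dots> = (\<Sum>B\<in>Pow Ori. (\<Prod>a\<in>B. Poly_Mapping.single (Poly_Mapping.single (fst a) (D (ed a))) (-1))
      * (\<Prod>a\<in>Ori - B. Poly_Mapping.single (Poly_Mapping.single (snd a) (D (ed a))) 1))"
    by (rule prod_add[OF fin_Ori])
  also have "\<dots> = (\<Sum>B\<in>Pow Ori. Poly_Mapping.single (mB D B) ((-1) ^ card B))"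
  proof (rule sum.cong[OF refl])
    fix B assume "B \<in> Pow Ori"
    then have fB: "finite B" using fin_Ori finite_subset by auto
    show "(\<Prod>a\<in>B. Poly_Mapping.single (Poly_Mapping.single (fst a) (D (ed a))) (-1))
      * (\<Prod>a\<in>Ori - B. Poly_Mapping.single (Poly_Mapping.single (snd a) (D (ed a))) (1::int))
      = Poly_Mapping.single (mB D B) ((-1) ^ card B)"
      unfolding prod_single[OF fB] prod_single[OF finite_Diff[OF fin_Ori]] mult_single mB_def
      by simp
  qed
  finally show ?thesis .
qed

lemma deg_mB: "B \<subseteq> Ori \<Longrightarrow> mon_deg (mB D B) = (\<Sum>a\<in>Ori. D (ed a))"
  unfolding mB_def mon_deg_add mon_deg_sum mon_deg_single
  using sum.subset_diff[OF _ fin_Ori, of B "\<lambda>a. D (ed a)"] by simp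

lemma keys_P: "Poly_Mapping.keys (P D) \<subseteq> {m. mon_deg m = (\<Sum>a\<in>Ori. D (ed a))}"
proof -
  have "Poly_Mapping.keys (P D) \<subseteq> (\<Union>B\<in>Pow Ori. Poly_Mapping.keys (Poly_Mapping.single (mB D B) ((-1::int) ^ card B)))"
    unfolding P_expand by (rule keys_sum)
  also have "\<dots> \<subseteq> (\<Union>B\<in>Pow Ori. {mB D B})" by auto
  also have "\<dots> \<subseteq> {m. mon_deg m = (\<Sum>a\<in>Ori. D (ed a))}" using deg_mB by auto
  finally show ?thesis .
qed

lemma keys_W: "Poly_Mapping.keys (aug_graph_poly E D) = Poly_Mapping.keys (P D)"
proof -
  obtain c where c: "c = 1 \<or> c = -1" "aug_graph_poly E D = c * P D" using W_eq by blast
  have "Poly_Mapping.keys (- P D) = Poly_Mapping.keys (P D)" by (auto simp: in_keys_iff)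
  then show ?thesis using c by auto
qed

definition tm :: "(nat set \<Rightarrow> nat) \<Rightarrow> (nat \<Rightarrow>\<^sub>0 nat)" where
  "tm D = (\<Sum>a\<in>Ori. Poly_Mapping.single (snd a) (D (ed a)))"

definition eB :: "(nat set \<Rightarrow> nat) \<Rightarrow> (nat \<times> nat) set \<Rightarrow> bool" where
  "eB D B \<longleftrightarrow> (\<forall>v. (\<Sum>a\<in>{a\<in>B. fst a = v}. D (ed a)) = (\<Sum>a\<in>{a\<in>B. snd a = v}. D (ed a)))"

lemma mB_eq:
  assumes B: "B \<subseteq> Ori"
  shows "mB D B = tm D \<longleftrightarrow> eB D B"
proof -
  have fB: "finite B" using B fin_Ori finite_subset by auto
  have "tm D = (\<Sum>a\<in>B. Poly_Mapping.single (snd a) (D (ed a))) + (\<Sum>a\<in>Ori - B. Poly_Mapping.single (snd a) (D (ed a)))"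
    unfolding tm_def using sum.subset_diff[OF B fin_Ori] by (simp add: add.commute)
  then have "mB D B = tm D \<longleftrightarrow> (\<Sum>a\<in>B. Poly_Mapping.single (fst a) (D (ed a))) = (\<Sum>a\<in>B. Poly_Mapping.single (snd a) (D (ed a)))"
    unfolding mB_def by simp
  also have "\<dots> \<longleftrightarrow> (\<forall>v. Poly_Mapping.lookup (\<Sum>a\<in>B. Poly_Mapping.single (fst a) (D (ed a))) v = Poly_Mapping.lookup (\<Sum>a\<in>B. Poly_Mapping.single (snd a) (D (ed a))) v)"
    by (auto intro: poly_mapping_eqI)
  also have "\<dots> \<longleftrightarrow> eB D B"
    unfolding eB_def lookup_sum_single[OF fB] ..
  finally show ?thesis .
qed

lemma lookup_P_t: "Poly_Mapping.lookup (P D) (tm D) = (\<Sum>B\<in>{B\<in>Pow Ori. eB D B}. (-1) ^ card B)"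
proof -
  have "Poly_Mapping.lookup (P D) (tm D) = (\<Sum>B\<in>Pow Ori. if eB D B then (-1) ^ card B else 0)"
    unfolding P_expand lookup_sum lookup_single
  proof (rule sum.cong[OF refl])
    fix B assume "B \<in> Pow Ori"
    then have "mB D B = tm D \<longleftrightarrow> eB D B" by (intro mB_eq) auto
    then show "((-1) ^ card B when mB D B = tm D) = (if eB D B then (-1) ^ card B else 0)"
      by (simp add: when_def)
  qed
  also have "\<dots> = (\<Sum>B\<in>{B\<in>Pow Ori. eB D B}. (-1) ^ card B)"
    by (rule sum.inter_filter[symmetric]) (simp add: fin_Ori)
  finally show ?thesis .
qed

lemma indeg_img:
  assumes B: "B \<subseteq> Ori"
  shows "aug_indeg (ed ` B) D Ori v = (\<Sum>a\<in>{a\<in>B. snd a = v}. D (ed a))"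
    and "aug_outdeg (ed ` B) D Ori v = (\<Sum>a\<in>{a\<in>B. fst a = v}. D (ed a))"
proof -
  have *: "{a\<in>Ori. {fst a, snd a} \<in> ed ` B \<and> P a} = {a\<in>B. P a}" for P
  proof -
    have "a \<in> Ori \<Longrightarrow> ed a \<in> ed ` B \<longleftrightarrow> a \<in> B" for a
      by (rule inj_on_image_mem_iff[OF inj_ed _ B])
    then show ?thesis using B unfolding ed_def by auto
  qed
  show "aug_indeg (ed ` B) D Ori v = (\<Sum>a\<in>{a\<in>B. snd a = v}. D (ed a))"
    unfolding aug_indeg_def * by (simp add: ed_def)
  show "aug_outdeg (ed ` B) D Ori v = (\<Sum>a\<in>{a\<in>B. fst a = v}. D (ed a))"
    unfolding aug_outdeg_def * by (simp add: ed_def)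
qed

lemma ES_iff:
  assumes B: "B \<subseteq> Ori"
  shows "eulerian_structure n E D Ori (ed ` B) \<longleftrightarrow> eB D B"
proof -
  have sub: "ed ` B \<subseteq> E" using B arc_in by auto
  have "(\<forall>v\<in>\<Union>(ed ` B). aug_indeg (ed ` B) D Ori v = aug_outdeg (ed ` B) D Ori v) \<longleftrightarrow> eB D B"
  proof
    assume h: "\<forall>v\<in>\<Union>(ed ` B). aug_indeg (ed ` B) D Ori v = aug_outdeg (ed ` B) D Ori v"
    show "eB D B" unfolding eB_def
    proof
      fix v
      show "(\<Sum>a\<in>{a\<in>B. fst a = v}. D (ed a)) = (\<Sum>a\<in>{a\<in>B. snd a = v}. D (ed a))"
      proof (cases "v \<in> \<Union>(ed ` B)")
        case True
        then show ?thesis using h indeg_img[OF B] by metis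
      next
        case False
        then have e1: "{a\<in>B. fst a = v} = {}" and e2: "{a\<in>B. snd a = v} = {}" by (auto simp: ed_def)
        show ?thesis by (simp only: e1 e2 sum.empty)
      qed
    qed
  next
    assume "eB D B"
    then show "\<forall>v\<in>\<Union>(ed ` B). aug_indeg (ed ` B) D Ori v = aug_outdeg (ed ` B) D Ori v"
      unfolding eB_def indeg_img[OF B] by metis
  qed
  then show ?thesis unfolding eulerian_structure_def using sub by blast
qed

lemma ES_count:
  "card {F. eulerian_structure n E D Ori F \<and> Q (card F)} = card {B. B \<subseteq> Ori \<and> eB D B \<and> Q (card B)}"
proof -
  have inj: "inj_on (image ed) {B. B \<subseteq> Ori \<and> eB D B \<and> Q (card B)}"
  proof (rule inj_onI)
    fix X Y assume "X \<in> {B. B \<subseteq> Ori \<and> eB D B \<and> Q (card B)}" "Y \<in> {B. B \<subseteq> Ori \<and> eB D B \<and> Q (card B)}" "ed ` X = ed ` Y"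
    then show "X = Y" using inj_on_image_eq_iff[OF inj_ed, of X Y] by simp
  qed
  have cardB: "B \<subseteq> Ori \<Longrightarrow> card (ed ` B) = card B" for B
    by (rule card_image) (rule inj_on_subset[OF inj_ed])
  have "{F. eulerian_structure n E D Ori F \<and> Q (card F)} = image ed ` {B. B \<subseteq> Ori \<and> eB D B \<and> Q (card B)}"
  proof
    show "{F. eulerian_structure n E D Ori F \<and> Q (card F)} \<subseteq> image ed ` {B. B \<subseteq> Ori \<and> eB D B \<and> Q (card B)}"
    proof
      fix F assume F: "F \<in> {F. eulerian_structure n E D Ori F \<and> Q (card F)}"
      then have FE: "F \<subseteq> E" unfolding eulerian_structure_def by blast
      define B where "B = {a\<in>Ori. ed a \<in> F}"
      have BO: "B \<subseteq> Ori" unfolding B_def by blast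
      have "ed ` B = F"
      proof
        show "ed ` B \<subseteq> F" unfolding B_def by blast
        show "F \<subseteq> ed ` B"
        proof
          fix e assume "e \<in> F"
          then have "e \<in> ed ` Ori" using FE img_ed by blast
          then obtain a where "a \<in> Ori" "e = ed a" by blast
          then show "e \<in> ed ` B" using \<open>e \<in> F\<close> unfolding B_def by blast
        qed
      qed
      have "eulerian_structure n E D Ori F" "Q (card F)" using F by auto
      then have "eB D B" "Q (card B)" using ES_iff[OF BO] cardB[OF BO] \<open>ed ` B = F\<close> by auto
      then have "B \<in> {B. B \<subseteq> Ori \<and> eB D B \<and> Q (card B)}" using BO by blast
      then show "F \<in> image ed ` {B. B \<subseteq> Ori \<and> eB D B \<and> Q (card B)}"
        using \<open>ed ` B = F\<close> by (intro image_eqI[of _ _ B]) auto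
    qed
    show "image ed ` {B. B \<subseteq> Ori \<and> eB D B \<and> Q (card B)} \<subseteq> {F. eulerian_structure n E D Ori F \<and> Q (card F)}"
    proof
      fix F assume "F \<in> image ed ` {B. B \<subseteq> Ori \<and> eB D B \<and> Q (card B)}"
      then obtain B where B: "B \<subseteq> Ori" "eB D B" "Q (card B)" "F = ed ` B" by blast
      then show "F \<in> {F. eulerian_structure n E D Ori F \<and> Q (card F)}"
        using ES_iff[OF B(1)] cardB[OF B(1)] by simp
    qed
  qed
  then show ?thesis using card_image[OF inj] by simp
qed

lemma signed_count:
  "(\<Sum>B\<in>{B\<in>Pow Ori. eB D B}. (-1::int) ^ card B) = int (num_even_ES n E D Ori) - int (num_odd_ES n E D Ori)"
proof -
  let ?S = "{B\<in>Pow Ori. eB D B}"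
  have fS: "finite ?S" using fin_Ori by simp
  have "(\<Sum>B\<in>?S. (-1::int) ^ card B) = (\<Sum>B\<in>?S. if even (card B) then 1 else -1)"
    by (intro sum.cong refl) simp
  also have "\<dots> = (\<Sum>B\<in>?S \<inter> {B. even (card B)}. 1) + (\<Sum>B\<in>?S \<inter> - {B. even (card B)}. -1)"
    by (rule sum.If_cases[OF fS])
  also have "\<dots> = int (card (?S \<inter> {B. even (card B)})) - int (card (?S \<inter> - {B. even (card B)}))"
    by simp
  also have "?S \<inter> {B. even (card B)} = {B. B \<subseteq> Ori \<and> eB D B \<and> even (card B)}" by auto
  also have "?S \<inter> - {B. even (card B)} = {B. B \<subseteq> Ori \<and> eB D B \<and> odd (card B)}" by auto
  finally show ?thesis unfolding num_even_ES_def num_odd_ES_def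
    using ES_count[of D "\<lambda>x. even x"] ES_count[of D "\<lambda>x. odd x"] by simp
qed

lemma tm_in_keys:
  assumes "num_even_ES n E D Ori \<noteq> num_odd_ES n E D Ori"
  shows "tm D \<in> Poly_Mapping.keys (aug_graph_poly E D)"
proof -
  have lP: "Poly_Mapping.lookup (P D) (tm D) \<noteq> 0"
    unfolding lookup_P_t signed_count using assms by simp
  obtain c where c: "c = 1 \<or> c = -1" "aug_graph_poly E D = c * P D" using W_eq by blast
  from c have "Poly_Mapping.lookup (aug_graph_poly E D) (tm D) = Poly_Mapping.lookup (P D) (tm D)
     \<or> Poly_Mapping.lookup (aug_graph_poly E D) (tm D) = - Poly_Mapping.lookup (P D) (tm D)"
    by auto
  then show ?thesis using lP by (auto simp: in_keys_iff)
qed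

lemma total_deg_W:
  assumes "x \<in> Poly_Mapping.keys (aug_graph_poly E D)"
  shows "total_deg (aug_graph_poly E D) = (\<Sum>a\<in>Ori. D (ed a))"
proof -
  have sub: "Poly_Mapping.keys (aug_graph_poly E D) \<subseteq> {m. mon_deg m = (\<Sum>a\<in>Ori. D (ed a))}"
    using keys_W keys_P by blast
  have "mon_deg ` Poly_Mapping.keys (aug_graph_poly E D) = {\<Sum>a\<in>Ori. D (ed a)}"
  proof
    show "mon_deg ` Poly_Mapping.keys (aug_graph_poly E D) \<subseteq> {\<Sum>a\<in>Ori. D (ed a)}" using sub by auto
    have "mon_deg x = (\<Sum>a\<in>Ori. D (ed a))" using sub assms by blast
    then show "{\<Sum>a\<in>Ori. D (ed a)} \<subseteq> mon_deg ` Poly_Mapping.keys (aug_graph_poly E D)"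
      using assms by (metis empty_subsetI image_eqI insert_subset)
  qed
  then show ?thesis unfolding total_deg_def by simp
qed

lemma deg_tm: "mon_deg (tm D) = (\<Sum>a\<in>Ori. D (ed a))"
  unfolding tm_def mon_deg_sum mon_deg_single ..

lemma lookup_tm: "Poly_Mapping.lookup (tm D) v = aug_indeg E D Ori v"
proof -
  have "{a\<in>Ori. {fst a, snd a} \<in> E \<and> snd a = v} = {a\<in>Ori. snd a = v}"
    using arc_in unfolding ed_def by blast
  then show ?thesis unfolding tm_def lookup_sum_single[OF fin_Ori] aug_indeg_def by (simp add: ed_def)
qed

lemma graph_poly_eq: "graph_poly E = aug_graph_poly E (\<lambda>_. 1)"
  unfolding graph_poly_def aug_graph_poly_def by simp

lemma W_factor: "\<exists>g. aug_graph_poly E D = graph_poly E * g"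
proof -
  have "aug_graph_poly E D = (\<Prod>e\<in>E. (Var (Min e) - Var (Max e)) *
     (\<Sum>i<D e. Var (Max e) ^ (D e - Suc i) * Var (Min e) ^ i))"
    unfolding aug_graph_poly_def by (intro prod.cong refl) (rule power_diff_sumr2)
  also have "\<dots> = graph_poly E * (\<Prod>e\<in>E. \<Sum>i<D e. Var (Max e) ^ (D e - Suc i) * Var (Min e) ^ i)"
    unfolding graph_poly_def by (rule prod.distrib)
  finally show ?thesis by blast
qed

lemma alpha_mono:
  assumes "tm D \<in> Poly_Mapping.keys (aug_graph_poly E D)"
  shows "alpha (graph_poly E) \<le> alpha (aug_graph_poly E D)"
proof -
  let ?W = "aug_graph_poly E D"
  let ?Q = "\<lambda>Q k. \<exists>m\<in>Poly_Mapping.keys Q. mon_deg m = total_deg Q \<and> (\<forall>i. Poly_Mapping.lookup m i \<le> k)"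
  have ex: "?Q ?W (Max (range (Poly_Mapping.lookup (tm D))))"
  proof (intro bexI conjI allI)
    show "mon_deg (tm D) = total_deg ?W" using total_deg_W[OF assms] deg_tm by simp
    fix i
    have "finite (range (Poly_Mapping.lookup (tm D)))"
    proof -
      have "range (Poly_Mapping.lookup (tm D)) \<subseteq> insert 0 (Poly_Mapping.lookup (tm D) ` Poly_Mapping.keys (tm D))"
        by (auto simp: in_keys_iff)
      then show ?thesis by (rule finite_subset) simp
    qed
    then show "Poly_Mapping.lookup (tm D) i \<le> Max (range (Poly_Mapping.lookup (tm D)))" by simp
  qed (rule assms)
  then have "?Q ?W (alpha ?W)" unfolding alpha_def by (rule LeastI)
  then obtain m where m: "m \<in> Poly_Mapping.keys ?W" "\<And>i. Poly_Mapping.lookup m i \<le> alpha ?W" by blast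
  obtain g where g: "?W = graph_poly E * g" using W_factor by blast
  have "m \<in> Poly_Mapping.keys (graph_poly E * g)" using m(1) g by simp
  then have "m \<in> {a + b |a b. a \<in> Poly_Mapping.keys (graph_poly E) \<and> b \<in> Poly_Mapping.keys g}"
    using keys_mult by blast
  then obtain a b where
    ab: "m = a + b" "a \<in> Poly_Mapping.keys (graph_poly E)" by blast
  have "total_deg (graph_poly E) = mon_deg a"
  proof -
    have ka: "a \<in> Poly_Mapping.keys (aug_graph_poly E (\<lambda>_. 1))" using ab(2) graph_poly_eq by simp
    have "mon_deg a = (\<Sum>x\<in>Ori. 1)" using ka keys_W keys_P by blast
    then show ?thesis using total_deg_W[OF ka] graph_poly_eq by simp
  qed
  moreover have "Poly_Mapping.lookup a i \<le> alpha ?W" for i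
    using m(2)[of i] ab(1) by (simp add: lookup_add)
  ultimately have "?Q (graph_poly E) (alpha ?W)" using ab(2) by auto
  then show ?thesis unfolding alpha_def[of "graph_poly E"] by (rule Least_le)
qed

end

theorem main_result:
  fixes n :: nat and E :: "nat set set" and D :: "nat set \<Rightarrow> nat" and Ori :: "(nat \<times> nat) set"
    and k :: nat
  assumes "aug_orientation n E D Ori"
    and "k = Max ((\<lambda>v. aug_indeg E D Ori v) ` {..<n})"
    and "num_even_ES n E D Ori \<noteq> num_odd_ES n E D Ori"
  shows "AT E - 1 = alpha (graph_poly E) \<and>
         alpha (graph_poly E) \<le> alpha (aug_graph_poly E D) \<and>
         alpha (aug_graph_poly E D) \<le> k"
proof -
  interpret oriset n E Ori using assms(1) unfolding aug_orientation_def by unfold_locales auto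
  have key: "tm D \<in> Poly_Mapping.keys (aug_graph_poly E D)" by (rule tm_in_keys[OF assms(3)])
  have bnd: "Poly_Mapping.lookup (tm D) i \<le> k" for i
  proof (cases "i < n")
    case True
    then show ?thesis unfolding lookup_tm assms(2) by (intro Max_ge) auto
  next
    case False
    have e: "{a\<in>Ori. snd a = i} = {}" using arc_props(3) False by fastforce
    show ?thesis unfolding tm_def lookup_sum_single[OF fin_Ori] e sum.empty by simp
  qed
  have "alpha (aug_graph_poly E D) \<le> k"
    unfolding alpha_def
    by (rule Least_le) (use key total_deg_W[OF key] deg_tm bnd in auto)
  then show ?thesis using alpha_mono[OF key] unfolding AT_def by simp
qed


theorem lemma2p7:
  fixes n :: nat and E :: "nat set set" and D :: "nat set \<Rightarrow> nat" and Ori :: "(nat \<times> nat) set"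
    and k :: nat
  assumes "aug_orientation n E D Ori"
    and "k = Max ((\<lambda>v. aug_indeg E D Ori v) ` {..<n})"
    and "num_even_ES n E D Ori \<noteq> num_odd_ES n E D Ori"
  shows "AT E - 1 = alpha (graph_poly E) \<and>
         alpha (graph_poly E) \<le> alpha (aug_graph_poly E D) \<and>
         alpha (aug_graph_poly E D) \<le> k"
  by (rule main_result[OF assms])

end
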